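(* Let $X$ be a reflexive real Banach space. Then for every nonempty closed convex subset $V$ of $X$, the triplet $(X,V,\mathcal{CB}(X))$ has weak-$\mathscr{F}_{cmc}$-SACP, where $\mathcal{CB}(X)$ is the family of all nonempty closed bounded subsets of $X$ and $\mathscr{F}_{cmc}$ is the class of all convex, monotone, coercive functions $f:\ell_\infty^+(F)\to[0,\infty)$, $F\in\mathcal{CB}(X)$.
   Context: For a nonempty closed bounded set $F\subseteq X$, $\ell_\infty^+(F)$ is the set of bounded functions $\varphi:F\to[0,\infty)$ with the coordinatewise order and sup norm $\|\varphi\|_\infty$. $f:\ell_\infty^+(F)\to[0,\infty)$ is monotone if $\varphi_1\le\varphi_2$ implies $f(\varphi_1)\le f(\varphi_2)$, and coercive if $f(\varphi)\to\infty$ as $\|\varphi\|_\infty\to\infty$. For $x\in X$, $r_f(x,F)=f((\|x-a\|)_{a\in F})$ and $\mathrm{rad}_V^f(F)=\inf_{v\in V}r_f(v,F)$. The triplet $(X,V,\mathfrak{F})$ has weak-$\mathscr{F}$-SACP if for every $F\in\mathfrak{F}$, every $f\in\mathscr{F}$ defined on $\ell_\infty^+(F)$ and every sequence $(v_n)\subseteq V$ with $r_f(v_n,F)\to\mathrm{rad}_V^f(F)$, $(v_n)$ has a weakly convergent subsequence. *)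

theory Defs
  imports "HOL-Analysis.Analysis"
begin

(* Reflexivity: the canonical embedding of X into its bidual is surjective,
i.e. every continuous linear functional on the dual X* = ('a L real) is evaluation at some x. *)
definition reflexive_space :: "'a::real_normed_vector itself \<Rightarrow> bool" where
  "reflexive_space _ \<longleftrightarrow>
     (\<forall>\<Phi> :: ('a \<Rightarrow>\<^sub>L real) \<Rightarrow>\<^sub>L real. \<exists>x::'a. \<forall>\<phi>. blinfun_apply \<Phi> \<phi> = blinfun_apply \<phi> x)"

definition weakly_converges_to :: "(nat \<Rightarrow> 'a::real_normed_vector) \<Rightarrow> 'a \<Rightarrow> bool" where
  "weakly_converges_to v x \<longleftrightarrow>
     (\<forall>\<phi> :: 'a \<Rightarrow>\<^sub>L real. (\<lambda>n. blinfun_apply \<phi> (v n)) \<longlonglongrightarrow> blinfun_apply \<phi> x)"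

(* l_inf^+(F): bounded nonnegative functions on F, represented extensionally
(value 0 outside F). *)
definition linf_pos :: "'a set \<Rightarrow> ('a \<Rightarrow> real) set" where
  "linf_pos F = {\<phi>. (\<forall>a\<in>F. 0 \<le> \<phi> a) \<and> bounded (\<phi> ` F) \<and> (\<forall>a. a \<notin> F \<longrightarrow> \<phi> a = 0)}"

definition sup_norm :: "'a set \<Rightarrow> ('a \<Rightarrow> real) \<Rightarrow> real" where
  "sup_norm F \<phi> = (SUP a\<in>F. \<bar>\<phi> a\<bar>)"

definition Fcmc :: "'a set \<Rightarrow> (('a \<Rightarrow> real) \<Rightarrow> real) set" where
  "Fcmc F = {f.
     (\<forall>\<phi>\<in>linf_pos F. 0 \<le> f \<phi>) \<and>
     (\<forall>\<phi>1\<in>linf_pos F. \<forall>\<phi>2\<in>linf_pos F. \<forall>t::real. 0 \<le> t \<and> t \<le> 1 \<longrightarrow>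
         f (\<lambda>a. (1 - t) * \<phi>1 a + t * \<phi>2 a) \<le> (1 - t) * f \<phi>1 + t * f \<phi>2) \<and>
     (\<forall>\<phi>1\<in>linf_pos F. \<forall>\<phi>2\<in>linf_pos F. (\<forall>a\<in>F. \<phi>1 a \<le> \<phi>2 a) \<longrightarrow> f \<phi>1 \<le> f \<phi>2) \<and>
     (\<forall>M::real. \<exists>R::real. \<forall>\<phi>\<in>linf_pos F. R \<le> sup_norm F \<phi> \<longrightarrow> M \<le> f \<phi>)}"

definition r_f :: "(('a \<Rightarrow> real) \<Rightarrow> real) \<Rightarrow> 'a::real_normed_vector \<Rightarrow> 'a set \<Rightarrow> real" where
  "r_f f x F = f (\<lambda>a. if a \<in> F then norm (x - a) else 0)"

definition rad_f :: "(('a \<Rightarrow> real) \<Rightarrow> real) \<Rightarrow> 'a::real_normed_vector set \<Rightarrow> 'a set \<Rightarrow> real" where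
  "rad_f f V F = (INF v\<in>V. r_f f v F)"

definition weak_SACP :: "'a::real_normed_vector set \<Rightarrow> 'a set set \<Rightarrow> ('a set \<Rightarrow> (('a \<Rightarrow> real) \<Rightarrow> real) set) \<Rightarrow> bool" where
  "weak_SACP V FF FC \<longleftrightarrow>
     (\<forall>F\<in>FF. \<forall>f\<in>FC F. \<forall>v::nat \<Rightarrow> 'a. (\<forall>n. v n \<in> V) \<and> (\<lambda>n. r_f f (v n) F) \<longlonglongrightarrow> rad_f f V F \<longrightarrow>
        (\<exists>s x. strict_mono s \<and> weakly_converges_to (v \<circ> s) x))"

definition CB :: "'a::real_normed_vector set set" where
  "CB = {F. F \<noteq> {} \<and> closed F \<and> bounded F}"

end

theory Submission
  imports Defs "HOL-Library.Diagonal_Subsequence"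
begin


definition lin_rel :: "('b::real_vector \<Rightarrow> real) \<Rightarrow> ('b \<times> real) set \<Rightarrow> bool" where
 "lin_rel q G \<longleftrightarrow> (0,0) \<in> G \<and>
   (\<forall>x a y b. (x,a)\<in>G \<longrightarrow> (y,b)\<in>G \<longrightarrow> (x+y,a+b)\<in>G) \<and>
   (\<forall>x a c. (x,a)\<in>G \<longrightarrow> (c *\<^sub>R x, c*a)\<in>G) \<and>
   (\<forall>x a b. (x,a)\<in>G \<longrightarrow> (x,b)\<in>G \<longrightarrow> a=b) \<and>
   (\<forall>x a. (x,a)\<in>G \<longrightarrow> a \<le> q x)"

lemma lin_relD:
  assumes "lin_rel q G"
  shows "(0,0)\<in>G" "\<And>x a y b. (x,a)\<in>G \<Longrightarrow> (y,b)\<in>G \<Longrightarrow> (x+y,a+b)\<in>G"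
    "\<And>x a c. (x,a)\<in>G \<Longrightarrow> (c *\<^sub>R x, c*a)\<in>G"
    "\<And>x a b. (x,a)\<in>G \<Longrightarrow> (x,b)\<in>G \<Longrightarrow> a=b"
    "\<And>x a. (x,a)\<in>G \<Longrightarrow> a \<le> q x"
  using assms unfolding lin_rel_def by blast+

lemma lin_rel_Union:
  assumes "C \<noteq> {}" "\<And>G. G \<in> C \<Longrightarrow> lin_rel q G"
    and ch: "\<And>X Y. X \<in> C \<Longrightarrow> Y \<in> C \<Longrightarrow> X \<subseteq> Y \<or> Y \<subseteq> X"
  shows "lin_rel q (\<Union>C)"
proof -
  have two: "\<exists>G\<in>C. p1 \<in> G \<and> p2 \<in> G" if "p1 \<in> \<Union>C" "p2 \<in> \<Union>C" for p1 p2
  proof -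
    from that obtain X Y where XY: "X\<in>C" "Y\<in>C" "p1\<in>X" "p2\<in>Y" by blast
    from ch[OF XY(1,2)] show ?thesis
    proof
      assume "X \<subseteq> Y" then show ?thesis using XY by blast
    next
      assume "Y \<subseteq> X" then show ?thesis using XY by blast
    qed
  qed
  from assms(1) obtain G0 where "G0\<in>C" by blast
  show ?thesis unfolding lin_rel_def
  proof (intro conjI allI impI)
    show "(0,0) \<in> \<Union>C" using \<open>G0\<in>C\<close> lin_relD(1)[OF assms(2)[OF \<open>G0\<in>C\<close>]] by blast
  next
    fix x a y b assume h: "(x,a) \<in> \<Union>C" "(y,b) \<in> \<Union>C"
    from two[OF h] obtain G where G: "G\<in>C" "(x,a)\<in>G" "(y,b)\<in>G" by blast
    from lin_relD(2)[OF assms(2)[OF G(1)] G(2,3)] G(1) show "(x+y,a+b) \<in> \<Union>C" by blast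
  next
    fix x a c assume h: "(x,a) \<in> \<Union>C"
    then obtain G where G: "G\<in>C" "(x,a)\<in>G" by blast
    from lin_relD(3)[OF assms(2)[OF G(1)] G(2)] G(1) show "(c *\<^sub>R x, c*a) \<in> \<Union>C" by blast
  next
    fix x a b assume h: "(x,a) \<in> \<Union>C" "(x,b) \<in> \<Union>C"
    from two[OF h] obtain G where G: "G\<in>C" "(x,a)\<in>G" "(x,b)\<in>G" by blast
    from lin_relD(4)[OF assms(2)[OF G(1)] G(2,3)] show "a = b" .
  next
    fix x a assume h: "(x,a) \<in> \<Union>C"
    then obtain G where G: "G\<in>C" "(x,a)\<in>G" by blast
    from lin_relD(5)[OF assms(2)[OF G(1)] G(2)] show "a \<le> q x" .
  qed
qed

lemma lin_rel_extend:
  fixes q :: "'b::real_vector \<Rightarrow> real"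
  assumes L: "lin_rel q G" and x0: "\<forall>a. (x0,a) \<notin> G"
    and q_add: "\<And>x y. q (x+y) \<le> q x + q y"
    and q_hom: "\<And>c x. c \<ge> 0 \<Longrightarrow> q (c *\<^sub>R x) = c * q x"
  shows "\<exists>G'. lin_rel q G' \<and> G \<subseteq> G' \<and> G' \<noteq> G"
proof -
  have G0: "(0,0)\<in>G" and Gadd: "\<And>x a y b. (x,a)\<in>G \<Longrightarrow> (y,b)\<in>G \<Longrightarrow> (x+y,a+b)\<in>G"
    and Gsc: "\<And>x a c. (x,a)\<in>G \<Longrightarrow> (c *\<^sub>R x, c*a)\<in>G"
    and Gfun: "\<And>x a b. (x,a)\<in>G \<Longrightarrow> (x,b)\<in>G \<Longrightarrow> a=b"
    and Gq: "\<And>x a. (x,a)\<in>G \<Longrightarrow> a \<le> q x"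
    using L unfolding lin_rel_def by blast+
  have key: "a - q (x - x0) \<le> q (y + x0) - b" if "(x,a)\<in>G" "(y,b)\<in>G" for x a y b
  proof -
    have "a + b \<le> q (x + y)" using Gq[OF Gadd[OF that]] .
    also have "x + y = (x - x0) + (y + x0)" by simp
    also have "q \<dots> \<le> q (x - x0) + q (y + x0)" by (rule q_add)
    finally show ?thesis by simp
  qed
  define c where "c = (SUP p\<in>G. snd p - q (fst p - x0))"
  note cdef = c_def
  have bdd: "bdd_above ((\<lambda>p. snd p - q (fst p - x0)) ` G)"
    unfolding bdd_above_def using key[OF _ G0] by fastforce
  have c_lo: "a - q (x - x0) \<le> c" if "(x,a)\<in>G" for x a
    unfolding cdef using cSUP_upper[OF that bdd] by simp
  have c_hi: "c \<le> q (y + x0) - b" if "(y,b)\<in>G" for y b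
    unfolding cdef using key[OF _ that] G0 by (intro cSUP_least) auto
  define G' where "G' = {(x + t *\<^sub>R x0, a + t * c) | x a t. (x,a)\<in>G}"
  have sub: "G \<subseteq> G'" unfolding G'_def by force
  have new: "(x0, c) \<in> G'" unfolding G'_def using G0 by force
  have uniq: "t = t' \<and> x = x' \<and> a = a'" if "(x,a)\<in>G" "(x',a')\<in>G" "x + t *\<^sub>R x0 = x' + t' *\<^sub>R x0" for x a x' a' t t'
  proof -
    have tt: "t = t'"
    proof (rule ccontr)
      assume "t \<noteq> t'"
      have "(x + (-1) *\<^sub>R x', a + (-1) * a') \<in> G" using Gadd[OF that(1) Gsc[OF that(2)]] .
      then have "((1/(t'-t)) *\<^sub>R (x + (-1) *\<^sub>R x'), (1/(t'-t)) * (a + (-1) * a')) \<in> G" by (rule Gsc)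
      moreover have "(1/(t'-t)) *\<^sub>R (x + (-1) *\<^sub>R x') = x0"
      proof -
        have "x - x' = (t' - t) *\<^sub>R x0" using that(3) by (simp add: algebra_simps)
        then show ?thesis using \<open>t \<noteq> t'\<close> by simp
      qed
      ultimately show False using x0 by simp
    qed
    then have "x = x'" using that(3) by simp
    then show ?thesis using tt Gfun that by blast
  qed
  have "lin_rel q G'" unfolding lin_rel_def
  proof (intro conjI allI impI)
    show "(0,0) \<in> G'" using sub G0 by blast
  next
    fix x a y b assume "(x,a)\<in>G'" "(y,b)\<in>G'"
    then obtain x1 a1 t1 x2 a2 t2 where "(x1,a1)\<in>G" "(x2,a2)\<in>G" "x = x1 + t1 *\<^sub>R x0" "a = a1 + t1 * c"
      "y = x2 + t2 *\<^sub>R x0" "b = a2 + t2 * c" unfolding G'_def by blast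
    then show "(x+y,a+b)\<in>G'" unfolding G'_def
      by (intro CollectI exI[of _ "x1+x2"] exI[of _ "a1+a2"] exI[of _ "t1+t2"])
         (auto simp: Gadd algebra_simps)
  next
    fix x a r assume "(x,a)\<in>G'"
    then obtain x1 a1 t1 where "(x1,a1)\<in>G" "x = x1 + t1 *\<^sub>R x0" "a = a1 + t1 * c" unfolding G'_def by blast
    moreover have "(r *\<^sub>R x1, r*a1) \<in> G" using Gsc calculation(1) by blast
    moreover have "r *\<^sub>R x = r *\<^sub>R x1 + (r*t1) *\<^sub>R x0" "r * a = r*a1 + (r*t1)*c"
      using calculation by (auto simp: algebra_simps)
    ultimately show "(r *\<^sub>R x, r*a)\<in>G'" unfolding G'_def by blast
  next
    fix x a b assume "(x,a)\<in>G'" "(x,b)\<in>G'"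
    then obtain x1 a1 t1 x2 a2 t2 where "(x1,a1)\<in>G" "(x2,a2)\<in>G" "x = x1 + t1 *\<^sub>R x0" "a = a1 + t1 * c"
      "x = x2 + t2 *\<^sub>R x0" "b = a2 + t2 * c" unfolding G'_def by blast
    then show "a = b" using uniq[of x1 a1 x2 a2 t1 t2] by auto
  next
    fix x a assume "(x,a)\<in>G'"
    then obtain x1 a1 t where h: "(x1,a1)\<in>G" "x = x1 + t *\<^sub>R x0" "a = a1 + t * c" unfolding G'_def by blast
    consider "t = 0" | "t > 0" | "t < 0" by linarith
    then show "a \<le> q x"
    proof cases
      case 1 then show ?thesis using h Gq by simp
    next
      case 2
      have "((1/t) *\<^sub>R x1 , (1/t) * a1) \<in> G" using Gsc[OF h(1)] .
      from c_hi[OF this] have "t * c \<le> t * (q ((1/t) *\<^sub>R x1 + x0) - (1/t) * a1)"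
        using 2 by (simp add: mult_left_mono)
      also have "\<dots> = q (t *\<^sub>R ((1/t) *\<^sub>R x1 + x0)) - a1"
        using 2 by (simp add: q_hom right_diff_distrib)
      also have "t *\<^sub>R ((1/t) *\<^sub>R x1 + x0) = x" using 2 h(2) by (simp add: scaleR_add_right)
      finally show ?thesis using h(3) by simp
    next
      case 3
      define u where "u = -t"
      have u: "u > 0" using 3 u_def by simp
      have "((1/u) *\<^sub>R x1 , (1/u) * a1) \<in> G" using Gsc[OF h(1)] .
      from c_lo[OF this] have "u * ((1/u) * a1 - q ((1/u) *\<^sub>R x1 - x0)) \<le> u * c"
        using u by (simp add: mult_left_mono)
      moreover have "u * ((1/u) * a1 - q ((1/u) *\<^sub>R x1 - x0)) = a1 - q (u *\<^sub>R ((1/u) *\<^sub>R x1 - x0))"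
        using u by (simp add: q_hom right_diff_distrib)
      moreover have "u *\<^sub>R ((1/u) *\<^sub>R x1 - x0) = x" using u h(2) u_def by (simp add: scaleR_diff_right)
      ultimately show ?thesis using h(3) u_def by simp
    qed
  qed
  then show ?thesis using sub new x0 by blast
qed

lemma hahn_banach_rel:
  fixes q :: "'b::real_vector \<Rightarrow> real"
  assumes L: "lin_rel q G0"
    and q_add: "\<And>x y. q (x+y) \<le> q x + q y"
    and q_hom: "\<And>c x. c \<ge> 0 \<Longrightarrow> q (c *\<^sub>R x) = c * q x"
  shows "\<exists>F. linear F \<and> (\<forall>x a. (x,a)\<in>G0 \<longrightarrow> F x = a) \<and> (\<forall>x. F x \<le> q x)"
proof -
  define A where "A = {G. G0 \<subseteq> G \<and> lin_rel q G}"
  have "\<exists>M\<in>A. \<forall>X\<in>A. M \<subseteq> X \<longrightarrow> X = M"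
  proof (rule subset_Zorn_nonempty)
    have "G0 \<in> A" using L unfolding A_def by simp
    then show "A \<noteq> {}" by blast
  next
    fix C assume C: "C \<noteq> {}" "subset.chain A C"
    then have CA: "C \<subseteq> A" and ch: "\<And>X Y. X\<in>C \<Longrightarrow> Y\<in>C \<Longrightarrow> X \<subseteq> Y \<or> Y \<subseteq> X"
      unfolding subset_chain_def by auto
    have "\<And>G. G \<in> C \<Longrightarrow> lin_rel q G" using CA unfolding A_def by auto
    then have "lin_rel q (\<Union>C)" using lin_rel_Union[OF C(1) _ ch] by blast
    moreover have "G0 \<subseteq> \<Union>C" using C(1) CA unfolding A_def by auto
    ultimately show "\<Union>C \<in> A" unfolding A_def by simp
  qed
  then obtain M where MA: "M \<in> A" and max: "\<And>X. X\<in>A \<Longrightarrow> M \<subseteq> X \<Longrightarrow> X = M"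
    by blast
  from MA have M: "G0 \<subseteq> M" "lin_rel q M" unfolding A_def by auto
  note MD = lin_relD[OF M(2)]
  have dom: "\<exists>a. (x,a) \<in> M" for x
  proof (rule ccontr)
    assume "\<not> ?thesis"
    then have "\<forall>a. (x,a) \<notin> M" by simp
    from lin_rel_extend[OF M(2) this q_add q_hom] obtain G' where
      G': "lin_rel q G'" "M \<subseteq> G'" "G' \<noteq> M" by blast
    have "G' \<in> A" using G'(1,2) M(1) unfolding A_def by auto
    from max[OF this G'(2)] G'(3) show False by simp
  qed
  define F where "F x = (THE a. (x,a) \<in> M)" for x
  have Fval: "F x = a" if "(x,a) \<in> M" for x a
    unfolding F_def
  proof (rule the_equality)
    show "(x,a) \<in> M" by (rule that)
    show "b = a" if "(x,b) \<in> M" for b using MD(4)[OF \<open>(x,b) \<in> M\<close> \<open>(x,a) \<in> M\<close>] .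
  qed
  have FM: "(x, F x) \<in> M" for x
  proof -
    obtain a where "(x,a) \<in> M" using dom[of x] by blast
    with Fval[OF this] show ?thesis by simp
  qed
  have "linear F"
  proof (rule linearI)
    show "F (x + y) = F x + F y" for x y using Fval[OF MD(2)[OF FM FM]] .
    show "F (c *\<^sub>R x) = c *\<^sub>R F x" for c x using Fval[OF MD(3)[OF FM]] by simp
  qed
  moreover have "\<forall>x a. (x,a)\<in>G0 \<longrightarrow> F x = a" using Fval M(1) by blast
  moreover have "\<forall>x. F x \<le> q x" using MD(5)[OF FM] by blast
  ultimately show ?thesis by blast
qed

lemma hb_line:
  fixes q :: "'b::real_vector \<Rightarrow> real"
  assumes q_add: "\<And>x y. q (x+y) \<le> q x + q y"
    and q_sc: "\<And>c x. q (c *\<^sub>R x) = \<bar>c\<bar> * q x"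
    and M: "subspace M" and d: "d > 0" and dist: "\<And>m. m \<in> M \<Longrightarrow> d \<le> q (z - m)"
  shows "\<exists>F. linear F \<and> (\<forall>m\<in>M. F m = 0) \<and> F z = d \<and> (\<forall>x. \<bar>F x\<bar> \<le> q x)"
proof -
  have q0: "q 0 = 0" using q_sc[of 0 0] by simp
  have qnn: "0 \<le> q x" for x
  proof -
    have "0 = q (x + (-1) *\<^sub>R x)" using q0 by simp
    also have "\<dots> \<le> q x + q ((-1) *\<^sub>R x)" by (rule q_add)
    finally show ?thesis using q_sc[of "-1" x] by simp
  qed
  have q_hom: "q (c *\<^sub>R x) = c * q x" if "c \<ge> 0" for c x using q_sc[of c x] that by simp
  have zM: "z \<notin> M" using dist[of z] d q0 by auto
  define G0 where "G0 = {(m + t *\<^sub>R z, t * d) | m t. m \<in> M}"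
  have inG0: "(m + t *\<^sub>R z, t * d) \<in> G0" if "m \<in> M" for m t
    unfolding G0_def using that by blast
  have M0: "0 \<in> M" using M by (rule subspace_0)
  have uniq: "t = t' \<and> m = m'" if "m\<in>M" "m'\<in>M" "m + t *\<^sub>R z = m' + t' *\<^sub>R z" for m m' t t'
  proof -
    have tt: "t = t'"
    proof (rule ccontr)
      assume "t \<noteq> t'"
      have "m' - m = (t - t') *\<^sub>R z" using that(3) by (simp add: algebra_simps)
      then have "z = (1/(t-t')) *\<^sub>R (m' - m)" using \<open>t \<noteq> t'\<close> by simp
      moreover have "(1/(t-t')) *\<^sub>R (m' - m) \<in> M"
        using M that(1,2) by (simp add: subspace_scale subspace_diff)
      ultimately show False using zM by simp
    qed
    then show ?thesis using that(3) by simp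
  qed
  have "lin_rel q G0" unfolding lin_rel_def
  proof (intro conjI allI impI)
    show "(0,0) \<in> G0" using inG0[OF M0, of 0] by simp
  next
    fix x a y b assume "(x,a)\<in>G0" "(y,b)\<in>G0"
    then obtain m1 t1 m2 t2 where h: "m1\<in>M" "m2\<in>M" "x = m1 + t1 *\<^sub>R z" "a = t1 * d"
      "y = m2 + t2 *\<^sub>R z" "b = t2 * d" unfolding G0_def by blast
    moreover have "m1 + m2 \<in> M" using M h subspace_add by blast
    moreover have "x + y = (m1 + m2) + (t1 + t2) *\<^sub>R z" "a + b = (t1+t2) * d"
      using h by (auto simp: algebra_simps)
    ultimately show "(x+y,a+b)\<in>G0" unfolding G0_def by blast
  next
    fix x a r assume "(x,a)\<in>G0"
    then obtain m1 t1 where h: "m1\<in>M" "x = m1 + t1 *\<^sub>R z" "a = t1 * d" unfolding G0_def by blast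
    moreover have "r *\<^sub>R m1 \<in> M" using M h subspace_scale by blast
    moreover have "r *\<^sub>R x = r *\<^sub>R m1 + (r * t1) *\<^sub>R z" "r * a = (r*t1) * d"
      using h by (auto simp: algebra_simps)
    ultimately show "(r *\<^sub>R x, r*a)\<in>G0" unfolding G0_def by blast
  next
    fix x a b assume "(x,a)\<in>G0" "(x,b)\<in>G0"
    then obtain m1 t1 m2 t2 where h: "m1\<in>M" "m2\<in>M" "x = m1 + t1 *\<^sub>R z" "a = t1 * d"
      "x = m2 + t2 *\<^sub>R z" "b = t2 * d" unfolding G0_def by blast
    then show "a = b" using uniq[of m1 m2 t1 t2] by auto
  next
    fix x a assume "(x,a)\<in>G0"
    then obtain m t where h: "m\<in>M" "x = m + t *\<^sub>R z" "a = t * d" unfolding G0_def by blast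
    show "a \<le> q x"
    proof (cases "t > 0")
      case False
      then have "a \<le> 0" using h d by (simp add: mult_nonpos_nonneg)
      then show ?thesis using qnn by (meson order_trans)
    next
      case True
      have mm: "- ((1/t) *\<^sub>R m) \<in> M" using M h by (simp add: subspace_scale subspace_neg)
      have "x = t *\<^sub>R (z - (- ((1/t) *\<^sub>R m)))" using h True by (simp add: algebra_simps)
      then have "q x = t * q (z - (- ((1/t) *\<^sub>R m)))" using q_hom True by simp
      moreover have "d \<le> q (z - (- ((1/t) *\<^sub>R m)))" using dist[OF mm] .
      ultimately show ?thesis using h True by (simp add: mult_left_mono)
    qed
  qed
  from hahn_banach_rel[OF this q_add q_hom] obtain F where
    F: "linear F" "\<And>x a. (x,a)\<in>G0 \<Longrightarrow> F x = a" "\<And>x. F x \<le> q x" by blast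
  have "F m = 0" if "m \<in> M" for m using F(2)[OF inG0[OF that, of 0]] by simp
  moreover have "F z = d" using F(2)[OF inG0[OF M0, of 1]] by simp
  moreover have "\<bar>F x\<bar> \<le> q x" for x
  proof -
    have "F (-x) \<le> q (-x)" by (rule F(3))
    moreover have "F (-x) = - F x" using F(1) by (simp add: linear_neg)
    moreover have "q (-x) = q x" using q_sc[of "-1" x] by simp
    ultimately show ?thesis using F(3)[of x] by simp
  qed
  ultimately show ?thesis using F(1) by blast
qed

lemma hb_norm_sep:
  fixes z :: "'a::real_normed_vector"
  assumes M: "subspace M" and d: "d > 0" and dist: "\<And>m. m \<in> M \<Longrightarrow> d \<le> norm (z - m)"
  shows "\<exists>g::'a \<Rightarrow>\<^sub>L real. (\<forall>m\<in>M. blinfun_apply g m = 0) \<and> blinfun_apply g z = d \<and> (\<forall>x. \<bar>blinfun_apply g x\<bar> \<le> norm x)"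
proof -
  obtain F where F: "linear F" "\<forall>m\<in>M. F m = 0" "F z = d" "\<forall>x. \<bar>F x\<bar> \<le> norm x"
    using hb_line[of norm, OF norm_triangle_ineq norm_scaleR M d dist] by blast
  have "bounded_linear F"
  proof (rule bounded_linear_intro[where K=1])
    show "F (x + y) = F x + F y" for x y by (rule linear_add[OF F(1)])
    show "F (r *\<^sub>R x) = r *\<^sub>R F x" for r x by (rule linear_scale[OF F(1)])
    show "norm (F x) \<le> norm x * 1" for x using F(4) by simp
  qed
  then show ?thesis using F by (intro exI[of _ "Blinfun F"]) (simp add: bounded_linear_Blinfun_apply)
qed

lemma hb_norming:
  fixes y :: "'a::real_normed_vector"
  shows "\<exists>g::'a \<Rightarrow>\<^sub>L real. blinfun_apply g y = norm y \<and> (\<forall>x. \<bar>blinfun_apply g x\<bar> \<le> norm x)"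
proof (cases "y = 0")
  case True then show ?thesis by (intro exI[of _ 0]) simp
next
  case False
  have "\<exists>g::'a \<Rightarrow>\<^sub>L real. (\<forall>m\<in>{0}. blinfun_apply g m = 0) \<and> blinfun_apply g y = norm y \<and> (\<forall>x. \<bar>blinfun_apply g x\<bar> \<le> norm x)"
  proof (rule hb_norm_sep)
    show "subspace {0::'a}" by (simp add: subspace_def)
    show "norm y > 0" using False by simp
    show "\<And>m. m \<in> {0} \<Longrightarrow> norm y \<le> norm (y - m)" by simp
  qed
  then show ?thesis by (elim exE) (rule exI, erule conjunct2)
qed



primrec yv :: "(nat \<Rightarrow> 'a::real_normed_vector) \<Rightarrow> (rat \<times> nat) list \<Rightarrow> 'a" where
  "yv xs [] = 0"
| "yv xs (p # l) = yv xs l + of_rat (fst p) *\<^sub>R xs (snd p)"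

lemma yv_append: "yv xs (l1 @ l2) = yv xs l1 + yv xs l2"
  by (induct l1) (auto simp: algebra_simps)

lemma yv_scale: "yv xs (map (\<lambda>p. (r * fst p, snd p)) l) = of_rat r *\<^sub>R yv xs l"
  by (induct l) (auto simp: algebra_simps of_rat_mult)

lemma yv_single: "yv xs [(1, n)] = xs n" by simp

lemma subspace_closure_yv: "subspace (closure (range (yv xs)))"
proof -
  let ?Y = "range (yv xs)"
  have add: "a + b \<in> ?Y" if "a\<in>?Y" "b\<in>?Y" for a b
  proof -
    from that obtain l1 l2 where "a = yv xs l1" "b = yv xs l2" by blast
    then have "a + b = yv xs (l1 @ l2)" by (simp add: yv_append)
    then show ?thesis by blast
  qed
  have sc: "of_rat r *\<^sub>R a \<in> ?Y" if "a\<in>?Y" for a r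
  proof -
    from that obtain l1 where "a = yv xs l1" by blast
    then have "of_rat r *\<^sub>R a = yv xs (map (\<lambda>p. (r * fst p, snd p)) l1)" by (simp add: yv_scale)
    then show ?thesis by blast
  qed
  show ?thesis
  proof (rule subspaceI)
    have "0 \<in> ?Y" by (rule range_eqI[of _ _ "[]"]) simp
    then show "0 \<in> closure ?Y" using closure_subset[of ?Y] by (rule subsetD[rotated])
  next
    fix x y assume xin: "x \<in> closure ?Y" and yin: "y \<in> closure ?Y"
    obtain sx where sx: "\<forall>n. sx n \<in> ?Y" "sx \<longlonglongrightarrow> x"
      using closure_sequential[THEN iffD1, OF xin] by (elim exE conjE) blast
    obtain sy where sy: "\<forall>n. sy n \<in> ?Y" "sy \<longlonglongrightarrow> y"
      using closure_sequential[THEN iffD1, OF yin] by (elim exE conjE) blast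
    have "\<forall>n. sx n + sy n \<in> ?Y" using add sx(1) sy(1) by simp
    moreover have "(\<lambda>n. sx n + sy n) \<longlonglongrightarrow> x + y" using sx(2) sy(2) by (rule tendsto_add)
    ultimately have "\<exists>s. (\<forall>n. s n \<in> ?Y) \<and> s \<longlonglongrightarrow> x + y"
      by (intro exI[of _ "\<lambda>n. sx n + sy n"] conjI)
    then show "x + y \<in> closure ?Y" by (simp only: closure_sequential)
  next
    fix c x assume xin: "x \<in> closure ?Y"
    obtain sx where sx: "\<forall>n. sx n \<in> ?Y" "sx \<longlonglongrightarrow> x"
      using closure_sequential[THEN iffD1, OF xin] by (elim exE conjE) blast
    have cin: "c \<in> closure (\<rat>::real set)" by (simp add: Rats_closure_real)
    obtain sc where scq: "\<forall>n. sc n \<in> \<rat>" "sc \<longlonglongrightarrow> c"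
      using closure_sequential[THEN iffD1, OF cin] by (elim exE conjE) blast
    have "sc n *\<^sub>R sx n \<in> ?Y" for n
    proof -
      obtain r where "sc n = of_rat r" using scq(1) by (meson Rats_cases)
      then show ?thesis using sc[OF sx(1)[rule_format, of n], of r] by simp
    qed
    then have "\<forall>n. sc n *\<^sub>R sx n \<in> ?Y" by simp
    moreover have "(\<lambda>n. sc n *\<^sub>R sx n) \<longlonglongrightarrow> c *\<^sub>R x" using scq(2) sx(2) by (rule tendsto_scaleR)
    ultimately have "\<exists>s. (\<forall>n. s n \<in> ?Y) \<and> s \<longlonglongrightarrow> c *\<^sub>R x"
      by (intro exI[of _ "\<lambda>n. sc n *\<^sub>R sx n"] conjI)
    then show "c *\<^sub>R x \<in> closure ?Y" by (simp only: closure_sequential)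
  qed
qed

lemma reflexive_weak_subseq:
  fixes xs :: "nat \<Rightarrow> 'a::real_normed_vector"
  assumes refl: "reflexive_space TYPE('a)" and B: "\<And>n. norm (xs n) \<le> B"
  shows "\<exists>s x. strict_mono s \<and> weakly_converges_to (xs \<circ> s) x"
proof -
  have B0: "0 \<le> B" using B[of 0] norm_ge_zero[of "xs 0"] by linarith
  have refl': "\<exists>x. \<forall>\<phi>. blinfun_apply \<Phi> \<phi> = blinfun_apply \<phi> x" for \<Phi> :: "('a \<Rightarrow>\<^sub>L real) \<Rightarrow>\<^sub>L real"
    using refl unfolding reflexive_space_def by blast
  have xb: "\<bar>blinfun_apply \<psi> (xs n)\<bar> \<le> norm \<psi> * B" for \<psi> :: "'a \<Rightarrow>\<^sub>L real" and n
  proof -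
    have "\<bar>blinfun_apply \<psi> (xs n)\<bar> \<le> norm \<psi> * norm (xs n)" using norm_blinfun[of \<psi> "xs n"] by simp
    also have "\<dots> \<le> norm \<psi> * B" using B[of n] by (simp add: mult_left_mono)
    finally show ?thesis .
  qed
  define p where "p \<psi> = (SUP n. \<bar>blinfun_apply \<psi> (xs n)\<bar>)" for \<psi> :: "'a \<Rightarrow>\<^sub>L real"
  have bdd: "bdd_above (range (\<lambda>n. \<bar>blinfun_apply \<psi> (xs n)\<bar>))" for \<psi> :: "'a \<Rightarrow>\<^sub>L real"
    using xb by (intro bdd_aboveI2[where M="norm \<psi> * B"]) blast
  have p_ge: "\<bar>blinfun_apply \<psi> (xs n)\<bar> \<le> p \<psi>" for \<psi> n
    unfolding p_def by (rule cSUP_upper[OF _ bdd]) simp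
  have p_le: "p \<psi> \<le> K" if "\<And>n. \<bar>blinfun_apply \<psi> (xs n)\<bar> \<le> K" for \<psi> K
    unfolding p_def using that by (intro cSUP_least) auto
  have p_nb: "p \<psi> \<le> norm \<psi> * B" for \<psi> using p_le xb by blast
  have p_add: "p (a + b) \<le> p a + p b" for a b
  proof (rule p_le)
    fix n
    have "\<bar>blinfun_apply (a + b) (xs n)\<bar> \<le> \<bar>blinfun_apply a (xs n)\<bar> + \<bar>blinfun_apply b (xs n)\<bar>"
      by (simp add: blinfun.add_left abs_triangle_ineq)
    also have "\<dots> \<le> p a + p b" using p_ge[of a n] p_ge[of b n] by simp
    finally show "\<bar>blinfun_apply (a + b) (xs n)\<bar> \<le> p a + p b" .
  qed
  have p_sc1: "p (c *\<^sub>R a) \<le> \<bar>c\<bar> * p a" for c a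
  proof (rule p_le)
    fix n
    have "\<bar>blinfun_apply (c *\<^sub>R a) (xs n)\<bar> = \<bar>c\<bar> * \<bar>blinfun_apply a (xs n)\<bar>"
      by (simp add: blinfun.scaleR_left abs_mult)
    also have "\<dots> \<le> \<bar>c\<bar> * p a" using p_ge[of a n] by (simp add: mult_left_mono)
    finally show "\<bar>blinfun_apply (c *\<^sub>R a) (xs n)\<bar> \<le> \<bar>c\<bar> * p a" .
  qed
  have p_sc: "p (c *\<^sub>R a) = \<bar>c\<bar> * p a" for c a
  proof (cases "c = 0")
    case True
    have "p 0 \<le> 0" by (rule p_le) simp
    moreover have "0 \<le> p 0" using p_ge[of 0 0] by simp
    ultimately show ?thesis using True by simp
  next
    case False
    have "p a = p ((1/c) *\<^sub>R (c *\<^sub>R a))" using False by simp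
    also have "\<dots> \<le> \<bar>1/c\<bar> * p (c *\<^sub>R a)" by (rule p_sc1)
    finally have "\<bar>c\<bar> * p a \<le> p (c *\<^sub>R a)" using False
      by (simp add: field_simps)
    then show ?thesis using p_sc1[of c a] by simp
  qed
  define Y where "Y = closure (range (yv xs))"
  have subY: "subspace Y" unfolding Y_def by (rule subspace_closure_yv)
  have xsY: "xs n \<in> Y" for n
    unfolding Y_def using closure_subset yv_single[of xs n] by (metis rangeI subsetD)
  have clY: "closed Y" unfolding Y_def by simp
  have Y0: "0 \<in> Y" using subY by (rule subspace_0)
  have "\<forall>l. \<exists>g::'a \<Rightarrow>\<^sub>L real. blinfun_apply g (yv xs l) = norm (yv xs l) \<and> (\<forall>x. \<bar>blinfun_apply g x\<bar> \<le> norm x)"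
    using hb_norming by blast
  then obtain gl :: "(rat \<times> nat) list \<Rightarrow> 'a \<Rightarrow>\<^sub>L real" where
    gl1: "\<And>l. blinfun_apply (gl l) (yv xs l) = norm (yv xs l)" and
    gl2: "\<And>l x. \<bar>blinfun_apply (gl l) x\<bar> \<le> norm x"
    by metis
  define h where "h k n = blinfun_apply (gl (from_nat k)) (xs n)" for k n
  have hb: "\<bar>h k n\<bar> \<le> B" for k n
    unfolding h_def using gl2[of "from_nat k" "xs n"] B[of n] by linarith
  interpret D: subseqs "\<lambda>k s. convergent (\<lambda>n. h k (s n))"
  proof unfold_locales
    fix k and s :: "nat \<Rightarrow> nat" assume "strict_mono s"
    obtain f where f: "strict_mono f" "monoseq (\<lambda>n. h k (s (f n)))"
      using seq_monosub[of "\<lambda>n. h k (s n)"] by blast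
    have "Bseq (\<lambda>n. h k (s (f n)))" using hb by (intro BseqI'[of _ B]) simp
    then have "convergent (\<lambda>n. h k (s (f n)))" using f(2) by (rule Bseq_monoseq_convergent)
    then show "\<exists>r'. strict_mono r' \<and> convergent (\<lambda>n. h k ((s \<circ> r') n))" using f(1) by auto
  qed
  define s where "s = D.diagseq"
  have smono: "strict_mono s" unfolding s_def by (rule D.subseq_diagseq)
  have convh: "convergent (\<lambda>n. h k (s n))" for k
  proof -
    have "convergent (\<lambda>n. h k ((D.diagseq \<circ> (+) (Suc k)) n))"
    proof (rule D.diagseq_holds)
      fix r :: "nat \<Rightarrow> nat" and s' :: "nat \<Rightarrow> nat" and n
      assume "strict_mono r" "convergent (\<lambda>i. h n (s' i))"
      then show "convergent (\<lambda>i. h n ((s' \<circ> r) i))"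
        using convergent_subseq_convergent[of "\<lambda>i. h n (s' i)" r] by (simp add: o_def)
    qed
    then have "convergent (\<lambda>n. h k (D.diagseq (n + Suc k)))" by (simp add: add.commute)
    then show ?thesis unfolding s_def by (rule convergent_ignore_initial_segment[THEN iffD1])
  qed
  have convgl: "convergent (\<lambda>n. blinfun_apply (gl l) (xs (s n)))" for l
    using convh[of "to_nat l"] unfolding h_def by simp
  have convspan: "convergent (\<lambda>n. blinfun_apply \<psi> (xs (s n)))" if "\<psi> \<in> span (range gl)" for \<psi>
  proof -
    have "subspace {\<psi>::'a \<Rightarrow>\<^sub>L real. convergent (\<lambda>n. blinfun_apply \<psi> (xs (s n)))}"
    proof (rule subspaceI)
      show "0 \<in> {\<psi>. convergent (\<lambda>n. blinfun_apply \<psi> (xs (s n)))}" by (simp add: convergent_const)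
    next
      fix a b :: "'a \<Rightarrow>\<^sub>L real" assume "a \<in> {\<psi>. convergent (\<lambda>n. blinfun_apply \<psi> (xs (s n)))}" "b \<in> {\<psi>. convergent (\<lambda>n. blinfun_apply \<psi> (xs (s n)))}"
      then show "a + b \<in> {\<psi>. convergent (\<lambda>n. blinfun_apply \<psi> (xs (s n)))}"
        by (simp add: blinfun.add_left convergent_add)
    next
      fix c and a :: "'a \<Rightarrow>\<^sub>L real" assume "a \<in> {\<psi>. convergent (\<lambda>n. blinfun_apply \<psi> (xs (s n)))}"
      then obtain L where "(\<lambda>n. blinfun_apply a (xs (s n))) \<longlonglongrightarrow> L" by (auto simp: convergent_def)
      then have "(\<lambda>n. c * blinfun_apply a (xs (s n))) \<longlonglongrightarrow> c * L" by (rule tendsto_mult_left)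
      then show "c *\<^sub>R a \<in> {\<psi>. convergent (\<lambda>n. blinfun_apply \<psi> (xs (s n)))}"
        by (auto simp: blinfun.scaleR_left convergent_def)
    qed
    from span_induct[OF that this] convgl show ?thesis by auto
  qed
  have dense: "\<exists>m\<in>span (range gl). p (\<phi> - m) < e" if epos: "e > 0" for \<phi> :: "'a \<Rightarrow>\<^sub>L real" and e :: real
  proof (rule ccontr)
    assume "\<not> ?thesis"
    then have dist: "\<And>m. m \<in> span (range gl) \<Longrightarrow> e \<le> p (\<phi> - m)" by (meson not_less)
    obtain F where F: "linear F" "\<forall>m\<in>span (range gl). F m = 0" "F \<phi> = e" "\<forall>\<psi>. \<bar>F \<psi>\<bar> \<le> p \<psi>"
      using hb_line[of p, OF p_add p_sc subspace_span epos dist] by blast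
    have blF: "bounded_linear F"
    proof (rule bounded_linear_intro[where K=B])
      show "F (a + b) = F a + F b" for a b by (rule linear_add[OF F(1)])
      show "F (r *\<^sub>R a) = r *\<^sub>R F a" for r a by (rule linear_scale[OF F(1)])
      show "norm (F a) \<le> norm a * B" for a using F(4)[rule_format, of a] p_nb[of a] by simp
    qed
    from refl'[of "Blinfun F"] obtain x where "\<forall>\<psi>. blinfun_apply (Blinfun F) \<psi> = blinfun_apply \<psi> x"
      by blast
    then have x: "\<And>\<psi>. F \<psi> = blinfun_apply \<psi> x" using bounded_linear_Blinfun_apply[OF blF] by simp
    have xp: "\<bar>blinfun_apply \<psi> x\<bar> \<le> p \<psi>" for \<psi> using F(4)[rule_format, of \<psi>] x[of \<psi>] by simp
    have xY: "x \<in> Y"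
    proof (rule ccontr)
      assume "x \<notin> Y"
      have "Y \<noteq> {}" using Y0 by blast
      have dpos: "infdist x Y > 0" by (rule infdist_pos_not_in_closed[OF clY \<open>Y \<noteq> {}\<close> \<open>x \<notin> Y\<close>])
      have dd: "infdist x Y \<le> norm (x - m)" if "m \<in> Y" for m using infdist_le[OF that, of x] by (simp add: dist_norm)
      obtain g :: "'a \<Rightarrow>\<^sub>L real" where g: "\<forall>m\<in>Y. blinfun_apply g m = 0" "blinfun_apply g x = infdist x Y"
        using hb_norm_sep[OF subY dpos dd] by blast
      have "p g \<le> 0" by (rule p_le) (simp add: g(1) xsY)
      then show False using xp[of g] g(2) dpos by simp
    qed
    have glx: "blinfun_apply (gl l) x = 0" for l
    proof -
      have "gl l \<in> span (range gl)" by (rule span_base) simp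
      then show ?thesis using F(2) x[of "gl l"] by simp
    qed
    have n2: "norm x \<le> 2 * norm (x - yv xs l)" for l
    proof -
      have "norm (yv xs l) = blinfun_apply (gl l) (yv xs l) - blinfun_apply (gl l) x" using gl1[of l] glx[of l] by simp
      also have "\<dots> = blinfun_apply (gl l) (yv xs l - x)" by (simp add: blinfun.diff_right)
      also have "\<dots> \<le> norm (yv xs l - x)" using gl2[of l "yv xs l - x"] by simp
      finally have "norm (yv xs l) \<le> norm (x - yv xs l)" by (simp add: norm_minus_commute)
      moreover have "norm x \<le> norm (x - yv xs l) + norm (yv xs l)"
        using norm_triangle_ineq[of "x - yv xs l" "yv xs l"] by simp
      ultimately show ?thesis by simp
    qed
    have "x = 0"
    proof (rule ccontr)
      assume "x \<noteq> 0"
      then have hx: "norm x / 2 > 0" by simp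
      have "x \<in> closure (range (yv xs))" using xY unfolding Y_def .
      then have "\<forall>e>0. \<exists>y\<in>range (yv xs). dist y x < e" by (simp only: closure_approachable)
      then obtain y where "y \<in> range (yv xs)" "dist y x < norm x / 2" using hx by blast
      then obtain l where "dist (yv xs l) x < norm x / 2" by blast
      then have "norm (x - yv xs l) < norm x / 2" by (simp add: dist_norm norm_minus_commute)
      then show False using n2[of l] by simp
    qed
    then show False using x[of \<phi>] F(3) epos by simp
  qed
  have convall: "convergent (\<lambda>n. blinfun_apply \<phi> (xs (s n)))" for \<phi> :: "'a \<Rightarrow>\<^sub>L real"
  proof -
    have "Cauchy (\<lambda>n. blinfun_apply \<phi> (xs (s n)))"
    proof (rule metric_CauchyI)
      fix e :: real assume "e > 0"
      then have e3: "e/3 > 0" by simp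
      obtain m where m: "m \<in> span (range gl)" "p (\<phi> - m) < e/3" using dense[OF e3, of \<phi>] by blast
      have "Cauchy (\<lambda>n. blinfun_apply m (xs (s n)))" using convspan[OF m(1)] by (rule convergent_Cauchy)
      from metric_CauchyD[OF this e3] obtain M where
        M: "\<forall>a\<ge>M. \<forall>b\<ge>M. dist (blinfun_apply m (xs (s a))) (blinfun_apply m (xs (s b))) < e/3" by blast
      have dn: "\<bar>blinfun_apply \<phi> (xs (s a)) - blinfun_apply m (xs (s a))\<bar> < e/3" for a
        using p_ge[of "\<phi> - m" "s a"] m(2) by (simp add: blinfun.diff_left)
      show "\<exists>M. \<forall>a\<ge>M. \<forall>b\<ge>M. dist (blinfun_apply \<phi> (xs (s a))) (blinfun_apply \<phi> (xs (s b))) < e"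
      proof (intro exI allI impI)
        fix a b assume "M \<le> a" "M \<le> b"
        then have "\<bar>blinfun_apply m (xs (s a)) - blinfun_apply m (xs (s b))\<bar> < e/3"
          using M by (simp add: dist_real_def)
        then show "dist (blinfun_apply \<phi> (xs (s a))) (blinfun_apply \<phi> (xs (s b))) < e"
          using dn[of a] dn[of b] unfolding dist_real_def by linarith
      qed
    qed
    then show ?thesis by (simp add: Cauchy_convergent_iff)
  qed
  define L where "L \<phi> = lim (\<lambda>n. blinfun_apply \<phi> (xs (s n)))" for \<phi> :: "'a \<Rightarrow>\<^sub>L real"
  have Lt: "(\<lambda>n. blinfun_apply \<phi> (xs (s n))) \<longlonglongrightarrow> L \<phi>" for \<phi>
    unfolding L_def using convall[of \<phi>] by (simp add: convergent_LIMSEQ_iff)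
  have blL: "bounded_linear L"
  proof (rule bounded_linear_intro[where K=B])
    fix a b :: "'a \<Rightarrow>\<^sub>L real"
    have "(\<lambda>n. blinfun_apply (a + b) (xs (s n))) \<longlonglongrightarrow> L a + L b"
      using tendsto_add[OF Lt[of a] Lt[of b]] by (simp add: blinfun.add_left)
    then show "L (a + b) = L a + L b" by (rule LIMSEQ_unique[OF Lt])
  next
    fix r and a :: "'a \<Rightarrow>\<^sub>L real"
    have "(\<lambda>n. blinfun_apply (r *\<^sub>R a) (xs (s n))) \<longlonglongrightarrow> r * L a"
      using tendsto_mult_left[OF Lt[of a], of r] by (simp add: blinfun.scaleR_left)
    then show "L (r *\<^sub>R a) = r *\<^sub>R L a" using LIMSEQ_unique[OF Lt] by simp
  next
    fix a :: "'a \<Rightarrow>\<^sub>L real"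
    have "(\<lambda>n. \<bar>blinfun_apply a (xs (s n))\<bar>) \<longlonglongrightarrow> \<bar>L a\<bar>" by (rule tendsto_rabs[OF Lt])
    then have "\<bar>L a\<bar> \<le> norm a * B" by (rule LIMSEQ_le_const2) (use xb in blast)
    then show "norm (L a) \<le> norm a * B" by simp
  qed
  from refl'[of "Blinfun L"] obtain x where "\<forall>\<psi>. blinfun_apply (Blinfun L) \<psi> = blinfun_apply \<psi> x"
    by blast
  then have x: "\<And>\<psi>. L \<psi> = blinfun_apply \<psi> x" using bounded_linear_Blinfun_apply[OF blL] by simp
  have "weakly_converges_to (xs \<circ> s) x"
    unfolding weakly_converges_to_def
  proof
    fix \<phi> :: "'a \<Rightarrow>\<^sub>L real"
    show "(\<lambda>n. blinfun_apply \<phi> ((xs \<circ> s) n)) \<longlonglongrightarrow> blinfun_apply \<phi> x"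
      using Lt[of \<phi>] x[of \<phi>] by simp
  qed
  then show ?thesis using smono by blast
qed

theorem theorem2p3:
  fixes V :: "'a::banach set"
  assumes "reflexive_space TYPE('a)"
    and "V \<noteq> {}" and "closed V" and "convex V"
  shows "weak_SACP V CB Fcmc"
  unfolding weak_SACP_def
proof (intro ballI allI impI)
  fix F :: "'a set" and f and v :: "nat \<Rightarrow> 'a"
  assume FCB: "F \<in> CB" and fF: "f \<in> Fcmc F"
    and hv: "(\<forall>n. v n \<in> V) \<and> (\<lambda>n. r_f f (v n) F) \<longlonglongrightarrow> rad_f f V F"
  have Fne: "F \<noteq> {}" and Fb: "bounded F" using FCB unfolding CB_def by auto
  have coer: "\<forall>M::real. \<exists>R::real. \<forall>\<phi>\<in>linf_pos F. R \<le> sup_norm F \<phi> \<longrightarrow> M \<le> f \<phi>"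
    using fF unfolding Fcmc_def by blast
  obtain a0 where a0: "a0 \<in> F" using Fne by blast
  obtain C where C: "\<And>a. a \<in> F \<Longrightarrow> norm a \<le> C" using Fb unfolding bounded_iff by blast
  define ph where "ph n = (\<lambda>a. if a \<in> F then norm (v n - a) else 0)" for n
  have rf: "r_f f (v n) F = f (ph n)" for n unfolding r_f_def ph_def by simp
  have "convergent (\<lambda>n. r_f f (v n) F)" using hv unfolding convergent_def by blast
  then have "Bseq (\<lambda>n. r_f f (v n) F)" by (rule convergent_imp_Bseq)
  then obtain K where K: "\<And>n. norm (r_f f (v n) F) \<le> K" using BseqD by blast
  from coer obtain R where R: "\<And>\<phi>. \<phi> \<in> linf_pos F \<Longrightarrow> R \<le> sup_norm F \<phi> \<Longrightarrow> K + 1 \<le> f \<phi>"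
    by blast
  have phb: "\<bar>ph n a\<bar> \<le> norm (v n) + C" if "a \<in> F" for n a
  proof -
    have "norm (v n - a) \<le> norm (v n) + norm a" by (rule norm_triangle_ineq4)
    then show ?thesis using C[OF that] that unfolding ph_def by simp
  qed
  have phL: "ph n \<in> linf_pos F" for n
  proof -
    have "bounded (ph n ` F)" unfolding bounded_iff
    proof (intro exI ballI)
      fix y assume "y \<in> ph n ` F"
      then obtain a where "a \<in> F" "y = ph n a" by blast
      then show "norm y \<le> norm (v n) + C" using phb[of a n] by simp
    qed
    moreover have "\<forall>a\<in>F. 0 \<le> ph n a" unfolding ph_def by simp
    moreover have "\<forall>a. a \<notin> F \<longrightarrow> ph n a = 0" unfolding ph_def by simp
    ultimately show ?thesis unfolding linf_pos_def by blast
  qed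
  have vb: "norm (v n) \<le> R + norm a0" for n
  proof -
    have "f (ph n) \<le> K" using K[of n] rf[of n] by simp
    then have "\<not> R \<le> sup_norm F (ph n)" using R[OF phL[of n]] by linarith
    then have sR: "sup_norm F (ph n) < R" by simp
    have bdd: "bdd_above ((\<lambda>a. \<bar>ph n a\<bar>) ` F)"
      by (rule bdd_aboveI2[where M="norm (v n) + C"]) (rule phb)
    have "\<bar>ph n a0\<bar> \<le> sup_norm F (ph n)" unfolding sup_norm_def by (rule cSUP_upper[OF a0 bdd])
    then have "norm (v n - a0) \<le> R" using sR a0 unfolding ph_def by simp
    moreover have "norm (v n) \<le> norm (v n - a0) + norm a0" using norm_triangle_ineq[of "v n - a0" a0] by simp
    ultimately show ?thesis by simp
  qed
  from reflexive_weak_subseq[OF assms(1) vb]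
  show "\<exists>s x. strict_mono s \<and> weakly_converges_to (v \<circ> s) x" .
qed

end
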